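(* Let $k\ge2$ and let $G=(\{a,b\},\varphi,a)$ be a circular D0L-system with $\varphi$ $k$-uniform, and suppose the graph of overhangs $GO_G$ contains two distinct vertices $s_1,s_2$ with an edge from $s_1$ to $s_2$ labelled $(\varphi(a),\varphi(a),\ell)$ and an edge from $s_2$ to $s_1$ labelled $(\varphi(b),\varphi(b),\ell)$. Let $R_{ab}=\max\{m: (ab)^m\in S(L(G))\}$, $R_{ba}=\max\{m:(ba)^m\in S(L(G))\}$ and $R_2=\min\{R_{ab},R_{ba}\}$. Then $R_2\le \frac{k-2}{2}$.
   Context: A D0L-system $G=(\mathcal{A},\varphi,w)$ has $L(G)=\{\varphi^n(w)\}$ and $S(L(G))$ the set of factors of its words. An interpretation of $u\in S(L(G))$ is $(p,v,s)$ with $v\in S(L(G))$, $\varphi(v)=pus$. With $v=v_1\cdots v_n$, $v'=v'_1\cdots v'_m$, $u=u_1\cdots u_\ell$, interpretations $(p,v,s),(p',v',s')$ are synchronized at position $j$ if $\varphi(v_1\cdots v_i)=pu_1\cdots u_j$ and $\varphi(v'_1\cdots v'_{i'})=p'u_1\cdots u_j$ for some $i,i'$; $u$ has a synchronizing point at $j$ if all its interpretations are pairwise synchronized at $j$. A PD0L-system injective on $S(L(G))$ is circular if there is $Z$ such that every $u\in S(L(G))$ with $|u|>Z$ has a synchronizing point. $\varphi$ is $k$-uniform if $|\varphi(a)|=|\varphi(b)|=k$. Let $X=\{\varphi(a),\varphi(b)\}$. An overhang is a triple $(u_1\cdots u_m,v_1\cdots v_n,|x|)$ with $u_i,v_j\in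 X$, $x$ nonempty, such that: (i) $x$ is a suffix of $u_1\cdots u_m$ but not of $u_2\cdots u_m$; (ii) $x$ is a prefix of $v_1\cdots v_n$ but not of $v_1\cdots v_{n-1}$; (iii) $x\ne u_1\cdots u_m$ or $x\ne v_1\cdots v_n$; (iv) $|v_1\cdots v_{n-1}|<|x(u_2\cdots u_m)^{-1}|$. Its left overhang is $u_1\cdots u_mx^{-1}$, right overhang $x^{-1}v_1\cdots v_n$. $GO_G$ has an edge from $s_1$ to $s_2$ labelled by each overhang with left overhang $s_1$ and right overhang $s_2$. *)

theory Defs
  imports Complex_Main "HOL-Library.Sublist"
begin

datatype letter = La | Lb

type_synonym morph = "letter \<Rightarrow> letter list"

definition morph_ext :: "morph \<Rightarrow> letter list \<Rightarrow> letter list" where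
  "morph_ext \<phi> w = concat (map \<phi> w)"

definition lang :: "morph \<Rightarrow> letter list \<Rightarrow> letter list set" where
  "lang \<phi> w = {(morph_ext \<phi> ^^ n) w | n. True}"

definition factors :: "morph \<Rightarrow> letter list \<Rightarrow> letter list set" where
  "factors \<phi> w = {u. \<exists>z\<in>lang \<phi> w. \<exists>p s. z = p @ u @ s}"

definition interp :: "morph \<Rightarrow> letter list \<Rightarrow> letter list \<Rightarrow>
    letter list \<times> letter list \<times> letter list \<Rightarrow> bool" where
  "interp \<phi> w u I = (case I of (p, v, s) \<Rightarrow>
      v \<in> factors \<phi> w \<and> morph_ext \<phi> v = p @ u @ s)"

definition synchronized_at :: "morph \<Rightarrow> letter list \<Rightarrow>
    letter list \<times> letter list \<times> letter list \<Rightarrow>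
    letter list \<times> letter list \<times> letter list \<Rightarrow> nat \<Rightarrow> bool" where
  "synchronized_at \<phi> u I I' j = (case I of (p, v, s) \<Rightarrow> case I' of (p', v', s') \<Rightarrow>
      (\<exists>i\<le>length v. morph_ext \<phi> (take i v) = p @ take j u) \<and>
      (\<exists>i'\<le>length v'. morph_ext \<phi> (take i' v') = p' @ take j u))"

definition sync_point :: "morph \<Rightarrow> letter list \<Rightarrow> letter list \<Rightarrow> nat \<Rightarrow> bool" where
  "sync_point \<phi> w u j = (j \<le> length u \<and>
      (\<forall>I I'. interp \<phi> w u I \<longrightarrow> interp \<phi> w u I' \<longrightarrow>
          synchronized_at \<phi> u I I' j))"

definition propagating :: "morph \<Rightarrow> bool" where
  "propagating \<phi> = (\<forall>c. \<phi> c \<noteq> [])"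

definition circular :: "morph \<Rightarrow> letter list \<Rightarrow> bool" where
  "circular \<phi> w = (propagating \<phi> \<and> inj_on (morph_ext \<phi>) (factors \<phi> w) \<and>
      (\<exists>Z::nat. \<forall>u\<in>factors \<phi> w. length u > Z \<longrightarrow> (\<exists>j. sync_point \<phi> w u j)))"

definition uniform :: "morph \<Rightarrow> nat \<Rightarrow> bool" where
  "uniform \<phi> k = (length (\<phi> La) = k \<and> length (\<phi> Lb) = k)"

definition overhang_wit :: "morph \<Rightarrow> letter list list \<Rightarrow> letter list list \<Rightarrow> letter list \<Rightarrow> bool" where
  "overhang_wit \<phi> us vs x = (
      us \<noteq> [] \<and> vs \<noteq> [] \<and>
      set us \<subseteq> {\<phi> La, \<phi> Lb} \<and> set vs \<subseteq> {\<phi> La, \<phi> Lb} \<and> x \<noteq> [] \<and>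
      suffix x (concat us) \<and> \<not> suffix x (concat (tl us)) \<and>
      prefix x (concat vs) \<and> \<not> prefix x (concat (butlast vs)) \<and>
      (x \<noteq> concat us \<or> x \<noteq> concat vs) \<and>
      length (concat (butlast vs)) < length x - length (concat (tl us)))"

definition overhang :: "morph \<Rightarrow> letter list list \<Rightarrow> letter list list \<Rightarrow> nat \<Rightarrow> bool" where
  "overhang \<phi> us vs l = (\<exists>x. length x = l \<and> overhang_wit \<phi> us vs x)"

definition left_overhang :: "letter list list \<Rightarrow> nat \<Rightarrow> letter list" where
  "left_overhang us l = take (length (concat us) - l) (concat us)"

definition right_overhang :: "letter list list \<Rightarrow> nat \<Rightarrow> letter list" where
  "right_overhang vs l = drop l (concat vs)"

definition GO_edge :: "morph \<Rightarrow> letter list \<Rightarrow> letter list list \<times> letter list list \<times> nat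
    \<Rightarrow> letter list \<Rightarrow> bool" where
  "GO_edge \<phi> s1 lab s2 = (case lab of (us, vs, l) \<Rightarrow>
      overhang \<phi> us vs l \<and> left_overhang us l = s1 \<and> right_overhang vs l = s2)"

definition R_ab :: "morph \<Rightarrow> letter list \<Rightarrow> nat" where
  "R_ab \<phi> w = Max {m. concat (replicate m [La, Lb]) \<in> factors \<phi> w}"

definition R_ba :: "morph \<Rightarrow> letter list \<Rightarrow> nat" where
  "R_ba \<phi> w = Max {m. concat (replicate m [Lb, La]) \<in> factors \<phi> w}"

end

theory Submission
  imports Defs
begin

lemma per_mult: fixes P :: "nat \<Rightarrow> 'a" and g q n :: nat assumes "\<forall>n. P (n+g) = P n" shows "P (n + g*q) = P n"
proof (induction q)
  case (Suc q)
  have "P (n + g * Suc q) = P ((n + g*q) + g)" by (simp add: algebra_simps)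
  then show ?case using assms Suc by simp
qed simp

lemma per_mod: fixes P :: "nat \<Rightarrow> 'a" and g n :: nat assumes "\<forall>n. P (n+g) = P n" shows "P n = P (n mod g)"
  using per_mult[OF assms, of "n mod g" "n div g"] by (metis mod_div_mult_eq mult.commute)

lemma per_gcd: fixes P :: "nat \<Rightarrow> 'a" and p q :: nat assumes "\<forall>n. P (n+p) = P n" "\<forall>n. P (n+q) = P n" "p \<noteq> 0"
  shows "\<forall>n. P (n + gcd p q) = P n"
proof
  fix n
  obtain x y where xy: "p * x = q * y + gcd p q" using bezout_nat[OF assms(3)] by blast
  have "P (n + gcd p q) = P (n + gcd p q + q*y)" using per_mult[OF assms(2)] by simp
  also have "\<dots> = P (n + p*x)" using xy by (simp add: add.commute add.left_commute)
  also have "\<dots> = P n" using per_mult[OF assms(1)] by simp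
  finally show "P (n + gcd p q) = P n" .
qed

lemma alt_long:
  fixes P :: "nat \<Rightarrow> 'a" and g a N :: nat
  assumes per: "\<forall>n. P (n+g) = P n" and g: "0 < g"
    and nd: "\<exists>n. P n = P (Suc n)"
    and alt: "\<forall>i. a \<le> i \<longrightarrow> Suc i < a + N \<longrightarrow> P i \<noteq> P (Suc i)"
    and N: "g < N"
  shows False
proof -
  have ge: "P n \<noteq> P (Suc n)" if "a \<le> n" for n
    using that
  proof (induction n rule: less_induct)
    case (less n)
    show ?case
    proof (cases "n < a + g")
      case True then show ?thesis using alt less.prems N by auto
    next
      case False
      then have "a \<le> n - g" by simp
      then have "P (n-g) \<noteq> P (Suc (n-g))" using less.IH[of "n-g"] g False by simp
      moreover have "P (n - g + g) = P (n-g)" "P (Suc (n-g) + g) = P (Suc (n-g))" using per by blast+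
      moreover have "n - g + g = n" "Suc (n-g) + g = Suc n" using False by auto
      ultimately show ?thesis by metis
    qed
  qed
  obtain n where n: "P n = P (Suc n)" using nd by blast
  have "a \<le> g*a" using g by simp
  then have "a \<le> n + g*a" by linarith
  then have "P (n + g*a) \<noteq> P (Suc (n + g*a))" using ge[of "n+g*a"] by blast
  moreover have "P (n + g*a) = P n" "P (Suc n + g*a) = P (Suc n)" using per_mult[OF per] by blast+
  ultimately show False using n by simp
qed

lemma modinj:
  fixes x y a N g :: nat
  assumes "a \<le> x" "x < a + N" "a \<le> y" "y < a + N" "N \<le> g" "x mod g = y mod g"
  shows "x = y"
proof -
  have *: "u = v" if "u \<le> v" "a \<le> u" "v < a + N" "u mod g = v mod g" for u v
  proof -
    have "g dvd v - u" using that mod_eq_dvd_iff_nat[of u v g] by simp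
    moreover have "v - u < g" using that assms(5) by linarith
    ultimately have "v - u = 0" using nat_dvd_not_less by (cases "v - u = 0") auto
    then show ?thesis using that by simp
  qed
  show ?thesis
  proof (cases "x \<le> y")
    case True then show ?thesis using * assms by blast
  next
    case False then show ?thesis using *[of y x] assms by simp
  qed
qed

lemma constancy:
  fixes Q :: "nat \<Rightarrow> bool"
  assumes "\<forall>i. a \<le> i \<longrightarrow> Suc i < b \<longrightarrow> Q i = Q (Suc i)"
  shows "a \<le> j \<Longrightarrow> j < b \<Longrightarrow> Q j = Q a"
proof (induction j)
  case 0 then show ?case by simp
next
  case (Suc j)
  show ?case
  proof (cases "a = Suc j")
    case False
    then have "a \<le> j" using Suc.prems by simp
    then show ?thesis using Suc assms by auto
  qed simp
qed

lemma core:
  fixes P :: "nat \<Rightarrow> letter" and g h k e \<tau> \<delta> L1 L2 :: nat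
  assumes per: "\<forall>n. P (n+g) = P n" and gh: "g = 2*h" "2 \<le> h" and ke: "k = g*e + h" "1 \<le> e"
   and nd: "\<exists>n. P n = P (Suc n)"
   and L1t: "L1 \<le> \<tau>"
   and p1: "\<forall>j. \<tau> - L1 \<le> j \<longrightarrow> Suc j < \<tau> \<longrightarrow> P j \<noteq> P (Suc j)"
   and p2: "\<forall>j. \<tau> + \<delta> \<le> j \<longrightarrow> Suc j < \<tau> + \<delta> + L2 \<longrightarrow> P j \<noteq> P (Suc j)"
   and cr: "0 < L1 \<Longrightarrow> 0 < L2 \<Longrightarrow> P (\<tau> - 1) \<noteq> P (\<tau> + \<delta>)"
   and dl: "\<delta> = 0 \<or> \<delta> = k" and ev: "even (L1 + L2)" and len: "k \<le> L1 + L2 + 1"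
  shows False
proof -
  have g0: "0 < g" using gh by simp
  have "g \<le> g*e" using ke by simp
  then have kg: "g + 2 \<le> k" using gh ke by linarith
  have long: "False" if "\<forall>i. a \<le> i \<longrightarrow> Suc i < a + N \<longrightarrow> P i \<noteq> P (Suc i)" "g < N" for a N
    using alt_long[OF per g0 nd that] .
  show False
  proof (cases "L1 = 0 \<or> L2 = 0")
    case True
    then show ?thesis
    proof
      assume "L1 = 0" then show False using long[of "\<tau>+\<delta>" L2] p2 len kg by simp
    next
      assume "L2 = 0" then show False using long[of "\<tau> - L1" L1] p1 len kg L1t by simp
    qed
  next
    case False
    hence pos: "0 < L1" "0 < L2" by auto
    have c: "P (\<tau>-1) \<noteq> P (\<tau>+\<delta>)" using cr pos .
    have t1: "1 \<le> \<tau>" using pos L1t by linarith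
    show False
    proof (cases "\<delta> = 0")
      case True
      have "\<forall>i. \<tau> - L1 \<le> i \<longrightarrow> Suc i < \<tau> - L1 + (L1+L2) \<longrightarrow> P i \<noteq> P (Suc i)"
      proof (intro allI impI)
        fix i assume i: "\<tau> - L1 \<le> i" "Suc i < \<tau> - L1 + (L1 + L2)"
        consider "Suc i < \<tau>" | "i = \<tau> - 1" | "\<tau> \<le> i" by linarith
        then show "P i \<noteq> P (Suc i)"
        proof cases
          case 1 then show ?thesis using p1 i by blast
        next
          case 2 then have "Suc i = \<tau>" using t1 by simp
          then show ?thesis using c 2 True by simp
        next
          case 3 then show ?thesis using p2 i True L1t by simp
        qed
      qed
      moreover have "g < L1+L2" using len kg by linarith
      ultimately show False using long[of "\<tau> - L1" "L1+L2"] by blast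
    next
      case False then have dk: "\<delta> = k" using dl by simp
      define Q where "Q i = ((P i = La) = even i)" for i
      have altQ: "P i \<noteq> P (Suc i) \<longleftrightarrow> Q i = Q (Suc i)" for i
        by (cases "P i"; cases "P (Suc i)") (auto simp: Q_def)
      have geven: "even g" using gh by simp
      have Qper: "\<forall>n. Q (n + g) = Q n" using per geven by (simp add: Q_def)
      have Qmult: "Q (n + g*q) = Q n" for n q using per_mult[OF Qper] .
      have Qmod: "Q n = Q (n mod g)" for n using per_mod[OF Qper] .
      obtain n0 where n0: "Q n0 \<noteq> Q (Suc n0)" using nd altQ by blast
      have L1g: "L1 \<le> g"
      proof (rule ccontr)
        assume "\<not> L1 \<le> g" then show False using long[of "\<tau> - L1" L1] p1 L1t by simp
      qed
      have L2g: "L2 \<le> g"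
      proof (rule ccontr)
        assume "\<not> L2 \<le> g" then show False using long[of "\<tau> + \<delta>" L2] p2 by simp
      qed
      have p1Q: "\<forall>j. \<tau> - L1 \<le> j \<longrightarrow> Suc j < \<tau> \<longrightarrow> Q j = Q (Suc j)" using p1 altQ by blast
      have p2Q: "\<forall>j. \<tau> + k \<le> j \<longrightarrow> Suc j < \<tau> + k + L2 \<longrightarrow> Q j = Q (Suc j)" using p2 altQ dk by blast
      have const1: "Q j = Q (\<tau> - 1)" if "\<tau> - L1 \<le> j" "j < \<tau>" for j
        using constancy[OF p1Q, of j] constancy[OF p1Q, of "\<tau> - 1"] that t1 pos L1t by simp
      have const2: "Q j = Q (\<tau> + k)" if "\<tau> + k \<le> j" "j < \<tau> + k + L2" for j
        using constancy[OF p2Q, of j] that by simp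
      show False
      proof (cases "even k")
        case True
        have "even (\<tau> - 1) \<noteq> even (\<tau> + k)" using True t1 by (cases \<tau>) auto
        then have cQ: "Q (\<tau>-1) = Q (\<tau>+k)" using c dk
          by (cases "P (\<tau> - 1)"; cases "P (\<tau> + k)") (auto simp: Q_def)
        obtain z where z: "Q z \<noteq> Q (\<tau> - 1)" using n0 by blast
        define z' where "z' = z + g*\<tau>"
        have "g*\<tau> \<ge> \<tau>" using g0 by simp
        then have z't: "\<tau> \<le> z'" unfolding z'_def by linarith
        have Qz': "Q z' = Q z" unfolding z'_def by (rule Qmult)
        define oo where "oo = (z' - \<tau>) mod g"
        have og: "oo < g" unfolding oo_def using g0 by simp
        have "z' - \<tau> = oo + g*((z'-\<tau>) div g)" unfolding oo_def by simp
        then have "z' = \<tau> + oo + g*((z'-\<tau>) div g)" using z't by linarith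
        then have Qo: "Q (\<tau> + oo) \<noteq> Q (\<tau> - 1)" using Qmult[of "\<tau>+oo" "(z'-\<tau>) div g"] Qz' z by simp
        have o1: "oo + L1 < g"
        proof (rule ccontr)
          assume a: "\<not> oo + L1 < g"
          define j where "j = \<tau> + oo - g"
          have "j + g = \<tau> + oo" unfolding j_def using a L1t by linarith
          then have "Q j = Q (\<tau> + oo)" using Qper[rule_format, of j] by simp
          moreover have "Q j = Q (\<tau> - 1)" using const1[of j] a og L1t unfolding j_def by linarith
          ultimately show False using Qo by simp
        qed
        have o2: "h + L2 \<le> oo" if "h \<le> oo"
        proof (rule ccontr)
          assume a: "\<not> h + L2 \<le> oo"
          define j where "j = \<tau> + k + (oo - h)"
          have "j = \<tau> + oo + g*e" unfolding j_def using ke that by simp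
          then have "Q j = Q (\<tau> + oo)" using Qmult by simp
          moreover have "oo - h < L2" using a that by linarith
          moreover have "Q j = Q (\<tau> - 1)" using const2[of j] \<open>oo - h < L2\<close> cQ unfolding j_def by simp
          ultimately show False using Qo by simp
        qed
        have o3: "L2 \<le> oo + h" if "oo < h"
        proof (rule ccontr)
          assume a: "\<not> L2 \<le> oo + h"
          define j where "j = \<tau> + k + (oo + g - h)"
          have "j = \<tau> + oo + g*(e+1)" unfolding j_def using ke that gh by simp
          then have "Q j = Q (\<tau> + oo)" using Qmult[of "\<tau>+oo" "e+1"] by simp
          moreover have "oo + g - h < L2" using a that gh by linarith
          moreover have "Q j = Q (\<tau> - 1)" using const2[of j] \<open>oo + g - h < L2\<close> cQ unfolding j_def by simp
          ultimately show False using Qo by simp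
        qed
        have "L1 + L2 < 3*h" using o1 o2 o3 gh by (cases "h \<le> oo") auto
        moreover have "k \<le> L1 + L2" using True ev len by presburger
        moreover have "3*h \<le> k" using ke gh \<open>g \<le> g*e\<close> by linarith
        ultimately show False by linarith
      next
        case False
        have "even (\<tau> - 1) = even (\<tau> + k)" using False t1 by (cases \<tau>) auto
        then have cQ: "Q (\<tau>-1) \<noteq> Q (\<tau>+k)" using c dk
          by (cases "P (\<tau> - 1)"; cases "P (\<tau> + k)") (auto simp: Q_def)
        define I1 where "I1 = {\<tau>-L1..<\<tau>}"
        define I2 where "I2 = {\<tau>+k..<\<tau>+k+L2}"
        define f where "f j = j mod g" for j
        have inj1: "inj_on f I1"
        proof (rule inj_onI)
          fix x y assume xy: "x \<in> I1" "y \<in> I1" "f x = f y"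
          have e: "\<tau> - L1 + L1 = \<tau>" using L1t by simp
          show "x = y" using modinj[of "\<tau>-L1" x L1 y g] xy L1g unfolding I1_def f_def e by simp
        qed
        have inj2: "inj_on f I2"
        proof (rule inj_onI)
          fix x y assume xy: "x \<in> I2" "y \<in> I2" "f x = f y"
          show "x = y" using modinj[of "\<tau>+k" x L2 y g] xy L2g unfolding I2_def f_def by simp
        qed
        have disj: "f ` I1 \<inter> f ` I2 = {}"
        proof (rule ccontr)
          assume "f ` I1 \<inter> f ` I2 \<noteq> {}"
          then obtain x y where xy: "x \<in> I1" "y \<in> I2" "f x = f y" by blast
          have "Q x = Q (f x)" "Q y = Q (f y)" unfolding f_def using Qmod by blast+
          then have "Q x = Q y" using xy(3) by metis
          moreover have "Q x = Q (\<tau> - 1)" using const1[of x] xy(1) unfolding I1_def by simp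
          moreover have "Q y = Q (\<tau> + k)" using const2[of y] xy(2) unfolding I2_def by simp
          ultimately show False using cQ by simp
        qed
        have c1: "card (f ` I1) = L1" using card_image[OF inj1] L1t unfolding I1_def by simp
        have c2: "card (f ` I2) = L2" using card_image[OF inj2] unfolding I2_def by simp
        have "card (f ` I1 \<union> f ` I2) = card (f ` I1) + card (f ` I2)"
          by (rule card_Un_disjoint[OF _ _ disj]) (simp_all add: I1_def I2_def)
        then have "card (f ` I1 \<union> f ` I2) = L1 + L2" using c1 c2 by simp
        moreover have "f ` I1 \<union> f ` I2 \<subseteq> {..<g}" unfolding f_def using g0 by auto
        then have "card (f ` I1 \<union> f ` I2) \<le> card {..<g}" by (intro card_mono) simp_all
        ultimately have "L1 + L2 \<le> g" by simp
        then show False using len kg by linarith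
      qed
    qed
  qed
qed

definition ab :: "nat \<Rightarrow> letter list" where "ab m = concat (replicate m [La, Lb])"
definition ba :: "nat \<Rightarrow> letter list" where "ba m = concat (replicate m [Lb, La])"

lemma ab_len: "length (ab m) = 2*m" by (induction m) (auto simp: ab_def)
lemma ba_len: "length (ba m) = 2*m" by (induction m) (auto simp: ba_def)

lemma ab_nth: "i < 2*m \<Longrightarrow> ab m ! i = (if even i then La else Lb)"
proof (induction m arbitrary: i)
  case 0 then show ?case by simp
next
  case (Suc m)
  have e: "ab (Suc m) = [La, Lb] @ ab m" by (simp add: ab_def)
  show ?case
  proof (cases "i < 2")
    case True then show ?thesis using e by (cases i) (auto simp: nth_Cons')
  next
    case False
    then have "ab (Suc m) ! i = ab m ! (i - 2)" using e by (simp add: nth_append numeral_2_eq_2)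
    moreover have "i - 2 < 2*m" using Suc.prems False by simp
    moreover have "even (i - 2) \<longleftrightarrow> even i" using False by presburger
    ultimately show ?thesis using Suc.IH[of "i-2"] by simp
  qed
qed

lemma ab_add: "ab (m1 + m2) = ab m1 @ ab m2" by (simp add: ab_def replicate_add)

lemma ab_snoc: "ab (Suc m) = ab m @ [La, Lb]"
  by (metis ab_add ab_def add.commute concat.simps(1,2) plus_1_eq_Suc replicate_0 replicate_Suc self_append_conv)

lemma ab_ba: "ab (Suc m) = La # (ba m @ [Lb])"
proof (induction m)
  case 0 then show ?case by (simp add: ab_def ba_def)
next
  case (Suc m)
  have "ab (Suc (Suc m)) = [La, Lb] @ ab (Suc m)" by (simp add: ab_def)
  also have "\<dots> = La # (ba (Suc m) @ [Lb])" using Suc by (simp add: ba_def)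
  finally show ?case .
qed

lemma morph_append: "morph_ext \<phi> (u @ v) = morph_ext \<phi> u @ morph_ext \<phi> v"
  by (simp add: morph_ext_def)

lemma morph_len: "\<forall>c. length (\<phi> c) = k \<Longrightarrow> length (morph_ext \<phi> z) = k * length z"
  by (induction z) (auto simp: morph_ext_def)

lemma nth_morph:
  assumes "\<forall>c. length (\<phi> c) = k" "p < k * length z"
  shows "morph_ext \<phi> z ! p = \<phi> (z ! (p div k)) ! (p mod k)"
  using assms(2)
proof (induction z arbitrary: p)
  case Nil then show ?case by simp
next
  case (Cons c z)
  have k0: "0 < k" using Cons.prems by (cases k) auto
  have e: "morph_ext \<phi> (c # z) = \<phi> c @ morph_ext \<phi> z" by (simp add: morph_ext_def)
  show ?case
  proof (cases "p < k")
    case True then show ?thesis using e assms(1) by (simp add: nth_append)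
  next
    case False
    have d: "p div k = Suc ((p - k) div k)" using le_div_geq[of k p] k0 False by simp
    have m: "p mod k = (p - k) mod k" using le_mod_geq[of k p] False by simp
    have "morph_ext \<phi> (c # z) ! p = morph_ext \<phi> z ! (p - k)" using e assms(1) False by (simp add: nth_append)
    also have "\<dots> = \<phi> (z ! ((p - k) div k)) ! ((p - k) mod k)" using Cons False by simp
    finally show ?thesis using d m by simp
  qed
qed

lemma fac_sub: "u \<in> factors \<phi> w \<Longrightarrow> u = p @ v @ s \<Longrightarrow> v \<in> factors \<phi> w"
proof -
  assume u: "u \<in> factors \<phi> w" and e: "u = p @ v @ s"
  then obtain z p' s' where "z \<in> lang \<phi> w" "z = p' @ u @ s'" unfolding factors_def by blast
  then have "z \<in> lang \<phi> w" "z = (p' @ p) @ v @ (s @ s')" using e by auto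
  then show ?thesis unfolding factors_def by blast
qed

lemma lang_morph: "z \<in> lang \<phi> w \<Longrightarrow> morph_ext \<phi> z \<in> lang \<phi> w"
  unfolding lang_def by (auto intro: exI[of _ "Suc _"])

lemma fac_morph: "v \<in> factors \<phi> w \<Longrightarrow> morph_ext \<phi> v \<in> factors \<phi> w"
proof -
  assume "v \<in> factors \<phi> w"
  then obtain z p s where z: "z \<in> lang \<phi> w" "z = p @ v @ s" unfolding factors_def by blast
  then have "morph_ext \<phi> z = morph_ext \<phi> p @ morph_ext \<phi> v @ morph_ext \<phi> s" by (simp add: morph_append)
  then show ?thesis using lang_morph[OF z(1)] unfolding factors_def by blast
qed

lemma nil_fac: "[] \<in> factors \<phi> w"
  unfolding factors_def lang_def by (rule CollectI, rule bexI[of _ w]) (auto intro: exI[of _ 0])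

lemma edge_facts:
  assumes "GO_edge \<phi> s1 ([A], [A], l) s2" "length A = k"
  shows "0 < l \<and> l < k \<and> A = s1 @ drop (k - l) A \<and> A = take l A @ s2 \<and> drop (k-l) A = take l A
     \<and> s1 = take (k - l) A \<and> s2 = drop l A"
proof -
  have ov: "overhang \<phi> [A] [A] l" and s1: "take (k - l) A = s1" and s2: "drop l A = s2"
    using assms unfolding GO_edge_def left_overhang_def right_overhang_def by auto
  obtain x where x: "length x = l" "overhang_wit \<phi> [A] [A] x" using ov unfolding overhang_def by blast
  have xn: "x \<noteq> []" and suf: "suffix x A" and pre: "prefix x A" and xA: "x \<noteq> A"
    using x(2) unfolding overhang_wit_def by auto
  obtain zs where zs: "A = x @ zs" using pre unfolding prefix_def by blast
  obtain ws where ws: "A = ws @ x" using suf unfolding suffix_def by blast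
  have l0: "0 < l" using xn x(1) by (cases x) auto
  have lk: "l < k" using zs xA assms(2) x(1) by (cases zs) auto
  have e1: "take l A = x" "drop l A = zs" using zs x(1) by simp_all
  have lws: "length ws = k - l" using ws x(1) assms(2) by simp
  have e2: "take (k - l) A = ws" "drop (k - l) A = x" using ws lws by simp_all
  have c1: "A = s1 @ drop (k - l) A" using s1 append_take_drop_id[of "k-l" A] by simp
  have c2: "A = take l A @ s2" using s2 append_take_drop_id[of l A] by simp
  have c3: "drop (k-l) A = take l A" using e1 e2 by simp
  show ?thesis using l0 lk c1 c2 c3 s1 s2 by simp
qed

definition PP :: "letter list \<Rightarrow> letter list \<Rightarrow> nat \<Rightarrow> nat \<Rightarrow> letter" where
  "PP A B k n = (if even (n div k) then A else B) ! (n mod k)"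

lemma PP_blk: "0 < k \<Longrightarrow> r < k \<Longrightarrow> PP A B k (q*k + r) = (if even q then A else B) ! r"
  unfolding PP_def by simp

lemma PP_2k: "0 < k \<Longrightarrow> PP A B k (n + 2*k) = PP A B k n"
  unfolding PP_def by simp

lemma PP_l:
  assumes k: "0 < l" "l < k" and lens: "length A = k" "length B = k"
    and nA1: "\<And>i. i < k - l \<Longrightarrow> A ! (l + i) = B ! i"
    and nB1: "\<And>i. i < k - l \<Longrightarrow> B ! (l + i) = A ! i"
    and nA2: "\<And>j. j < l \<Longrightarrow> A ! (k - l + j) = A ! j"
    and nB2: "\<And>j. j < l \<Longrightarrow> B ! (k - l + j) = B ! j"
  shows "PP A B k (n + l) = PP A B k (n + k)"
proof -
  have k0: "0 < k" using k by simp
  let ?P = "PP A B k"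
  have base: "?P (n + l) = ?P (n + k)" if n: "n < 2*k" for n
  proof (cases "n < k")
    case True
    show ?thesis
    proof (cases "n < k - l")
      case True
      have e: "n + l = 0*k + (l + n)" by simp
      have "?P (n + l) = ?P (0*k + (l + n))" by (simp only: e)
      also have "\<dots> = A ! (l + n)" using PP_blk[OF k0, of "l+n" A B 0] True by simp
      also have "\<dots> = B ! n" using nA1 True by simp
      also have "\<dots> = ?P (1*k + n)" using PP_blk[OF k0, of n A B 1] \<open>n < k\<close> by simp
      finally have "?P (n + l) = ?P (1*k + n)" .
      moreover have e3: "n + k = 1*k + n" by simp
      ultimately show ?thesis by (simp only: e3)
    next
      case False
      have e: "n + l = 1*k + (n - (k - l))" using False k by linarith
      have "?P (n + l) = ?P (1*k + (n - (k - l)))" by (simp only: e)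
      also have "\<dots> = B ! (n - (k - l))" using PP_blk[OF k0, of "n - (k-l)" A B 1] \<open>n < k\<close> by simp
      also have "\<dots> = B ! (k - l + (n - (k - l)))" using nB2[of "n - (k-l)"] \<open>n < k\<close> False by simp
      also have "\<dots> = ?P (1*k + n)" using PP_blk[OF k0, of n A B 1] \<open>n < k\<close> False by simp
      finally have "?P (n + l) = ?P (1*k + n)" .
      moreover have e3: "n + k = 1*k + n" by simp
      ultimately show ?thesis by (simp only: e3)
    qed
  next
    case False
    define r where "r = n - k"
    have r: "n = k + r" "r < k" using False n unfolding r_def by auto
    have e2: "n + k = 2*k + r" using r by simp
    show ?thesis
    proof (cases "r < k - l")
      case True
      have e: "n + l = 1*k + (l + r)" using r by linarith
      have "?P (n + l) = ?P (1*k + (l + r))" by (simp only: e)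
      also have "\<dots> = B ! (l + r)" using PP_blk[OF k0, of "l+r" A B 1] True by simp
      also have "\<dots> = A ! r" using nB1 True by simp
      also have "\<dots> = ?P (2*k + r)" using PP_blk[OF k0, of r A B 2] r by simp
      finally have "?P (n + l) = ?P (2*k + r)" .
      then show ?thesis by (simp only: e2)
    next
      case False
      have e: "n + l = 2*k + (r - (k - l))" using False k r by linarith
      have "?P (n + l) = ?P (2*k + (r - (k - l)))" by (simp only: e)
      also have "\<dots> = A ! (r - (k - l))" using PP_blk[OF k0, of "r - (k-l)" A B 2] r by simp
      also have "\<dots> = A ! (k - l + (r - (k - l)))" using nA2[of "r - (k-l)"] r False by simp
      also have "\<dots> = ?P (2*k + r)" using PP_blk[OF k0, of r A B 2] r False by simp
      finally have "?P (n + l) = ?P (2*k + r)" .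
      then show ?thesis by (simp only: e2)
    qed
  qed
  have per: "\<forall>n. ?P (n + 2*k) = ?P n" using PP_2k[OF k0] by blast
  define q where "q = n div (2*k)"
  define r where "r = n mod (2*k)"
  have n: "n = r + 2*k*q" "r < 2*k" unfolding q_def r_def using k0 by auto
  have e: "n + l = (r + l) + 2*k*q" using n by simp
  have "?P (n + l) = ?P ((r + l) + 2*k*q)" by (simp only: e)
  also have "\<dots> = ?P (r + l)" using per_mult[OF per] by simp
  also have "\<dots> = ?P (r + k)" using base[OF n(2)] .
  also have "\<dots> = ?P ((r + k) + 2*k*q)" using per_mult[OF per] by simp
  finally have "?P (n + l) = ?P ((r + k) + 2*k*q)" .
  moreover have "n + k = (r + k) + 2*k*q" using n by simp
  ultimately show ?thesis by (simp only:)
qed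

lemma lang_cases:
  assumes "zz \<in> lang \<phi> w"
  obtains n where "zz = (morph_ext \<phi> ^^ n) w"
  using assms unfolding lang_def by blast

lemma divmod_blk: "0 < (k::nat) \<Longrightarrow> r < k \<Longrightarrow> (q*k + r) div k = q \<and> (q*k + r) mod k = r"
  by simp

lemma nd_bound:
  fixes \<phi> :: morph and P :: "nat \<Rightarrow> letter"
  assumes unif: "\<forall>c. length (\<phi> c) = k" and k2: "2 \<le> k"
    and phiP: "\<And>c j. j < k \<Longrightarrow> \<phi> c ! j = P (j + (if c = La then 0 else k))"
    and P2k: "\<And>n. P (n + 2*k) = P n"
    and per: "\<forall>n. P (n+g) = P n" and gh: "g = 2*h" "2 \<le> h" and ke: "k = g*e + h" "1 \<le> e"
    and nd: "\<exists>n. P n = P (Suc n)"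
    and fac: "ab m \<in> factors \<phi> [La]"
  shows "2*m \<le> k - 2"
proof (rule ccontr)
  assume "\<not> 2*m \<le> k - 2"
  then have m1: "k - 1 \<le> 2*m" by linarith
  define m' where "m' = k div 2"
  have mm: "m' \<le> m" using m1 unfolding m'_def by linarith
  have "ab m = [] @ ab m' @ ab (m - m')" using ab_add[of m' "m - m'"] mm by simp
  then have fac': "ab m' \<in> factors \<phi> [La]" using fac_sub[OF fac] by blast
  define L where "L = 2*m'"
  define w where "w = ab m'"
  have Lk: "k - 1 \<le> L" "L \<le> k" "2 \<le> L" unfolding L_def m'_def using k2 by auto
  have wL: "length w = L" unfolding w_def L_def by (simp add: ab_len)
  have k0: "0 < k" using k2 by simp
  obtain zz p s where zz: "zz \<in> lang \<phi> [La]" "zz = p @ w @ s"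
    using fac' unfolding factors_def w_def by blast
  obtain n where n: "zz = (morph_ext \<phi> ^^ n) [La]" using lang_cases[OF zz(1)] by blast
  have "n \<noteq> 0"
  proof
    assume "n = 0"
    then have "length zz = 1" using n by simp
    moreover have "length zz \<ge> L" using zz(2) wL by simp
    ultimately show False using Lk by simp
  qed
  then obtain n0 where "n = Suc n0" by (cases n) auto
  define z where "z = (morph_ext \<phi> ^^ n0) [La]"
  have zzz: "zz = morph_ext \<phi> z" using n \<open>n = Suc n0\<close> unfolding z_def by simp
  define s0 where "s0 = length p"
  have lenzz: "length zz = k * length z" using zzz morph_len[OF unif] by simp
  have s0L: "s0 + L \<le> k * length z" using zz(2) wL lenzz unfolding s0_def by simp
  have F: "w ! i = P ((s0+i) mod k + (if z ! ((s0+i) div k) = La then 0 else k))" if "i < L" for i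
  proof -
    have "w ! i = zz ! (s0 + i)" using zz(2) that wL unfolding s0_def by (simp add: nth_append)
    also have "\<dots> = \<phi> (z ! ((s0+i) div k)) ! ((s0+i) mod k)"
      using zzz nth_morph[OF unif, of "s0+i" z] s0L that by simp
    also have "\<dots> = P ((s0+i) mod k + (if z ! ((s0+i) div k) = La then 0 else k))"
      using phiP k0 by simp
    finally show ?thesis .
  qed
  have W: "w ! i = (if even i then La else Lb)" if "i < L" for i
    using ab_nth[of i m'] that unfolding w_def L_def by simp
  have alt: "w ! i \<noteq> w ! Suc i" if "Suc i < L" for i
    using W[of i] W[of "Suc i"] that by simp
  define b0 where "b0 = s0 div k"
  define r0 where "r0 = s0 mod k"
  define X where "X = z ! b0"
  define Y where "Y = z ! Suc b0"
  define oX where "oX = (if X = La then 0 else k)"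
  define oY where "oY = (if Y = La then 0 else k)"
  define L1 where "L1 = min L (k - r0)"
  define L2 where "L2 = L - L1"
  define \<sigma> where "\<sigma> = r0 + oX"
  define \<tau> where "\<tau> = \<sigma> + L1"
  define \<delta> where "\<delta> = (if X = Y then k else 0)"
  have s0e: "s0 = b0*k + r0" "r0 < k" unfolding b0_def r0_def using k0 by auto
  have Fa: "w ! i = P (\<sigma> + i)" if "i < L1" for i
  proof -
    have i: "i < L" "r0 + i < k" using that unfolding L1_def by auto
    have e: "s0 + i = b0*k + (r0 + i)" using s0e by simp
    have "(s0+i) div k = b0" "(s0+i) mod k = r0 + i" unfolding e using i k0 by simp_all
    then show ?thesis using F[OF i(1)] unfolding \<sigma>_def oX_def X_def by (simp add: add.commute add.left_commute)
  qed
  have shiftY: "P (j + oY) = P (\<tau> + \<delta> + j)" if "L1 < L" for j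
  proof -
    have "L1 = k - r0" using that unfolding L1_def by simp
    then have t: "\<tau> = k + oX" unfolding \<tau>_def \<sigma>_def using s0e by simp
    show ?thesis
    proof (cases "X = La \<and> Y = Lb")
      case True
      then have "\<tau> + \<delta> + j = j + oY" using t unfolding oX_def oY_def \<delta>_def by simp
      then show ?thesis by (simp add: add.commute)
    next
      case False
      then have "\<tau> + \<delta> + j = (j + oY) + 2*k" using t unfolding oX_def oY_def \<delta>_def
        by (cases X; cases Y) simp_all
      then show ?thesis using P2k[of "j + oY"] by metis
    qed
  qed
  have Fb: "w ! i = P (\<tau> + \<delta> + (i - L1))" if "L1 \<le> i" "i < L" for i
  proof -
    have LL: "L1 < L" using that by simp
    then have l1: "L1 = k - r0" unfolding L1_def by simp
    have i2: "i - L1 < k" using that l1 Lk s0e by linarith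
    have e: "s0 + i = Suc b0 * k + (i - L1)" using s0e l1 that by simp
    have "(s0+i) div k = Suc b0" "(s0+i) mod k = i - L1" unfolding e using divmod_blk[OF k0 i2, of "Suc b0"] by simp_all
    then have "w ! i = P ((i - L1) + oY)" using F[OF that(2)] unfolding oY_def Y_def by simp
    then show ?thesis using shiftY[OF LL] by simp
  qed
  have p1: "\<forall>j. \<tau> - L1 \<le> j \<longrightarrow> Suc j < \<tau> \<longrightarrow> P j \<noteq> P (Suc j)"
  proof (intro allI impI)
    fix j assume j: "\<tau> - L1 \<le> j" "Suc j < \<tau>"
    define i where "i = j - \<sigma>"
    have ji: "j = \<sigma> + i" "Suc i < L1" using j unfolding i_def \<tau>_def by auto
    then have "P j = w ! i" "P (Suc j) = w ! Suc i" using Fa[of i] Fa[of "Suc i"] by auto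
    moreover have "Suc i < L" using ji unfolding L1_def by simp
    ultimately show "P j \<noteq> P (Suc j)" using alt by simp
  qed
  have p2: "\<forall>j. \<tau> + \<delta> \<le> j \<longrightarrow> Suc j < \<tau> + \<delta> + L2 \<longrightarrow> P j \<noteq> P (Suc j)"
  proof (intro allI impI)
    fix j assume j: "\<tau> + \<delta> \<le> j" "Suc j < \<tau> + \<delta> + L2"
    define i where "i = L1 + (j - (\<tau> + \<delta>))"
    have i: "L1 \<le> i" "Suc i < L" "i - L1 = j - (\<tau> + \<delta>)" "Suc i - L1 = Suc j - (\<tau> + \<delta>)"
      using j unfolding i_def L2_def by auto
    have "P j = w ! i" using Fb[of i] i j by simp
    moreover have "P (Suc j) = w ! Suc i" using Fb[of "Suc i"] i j by simp
    ultimately show "P j \<noteq> P (Suc j)" using alt i by simp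
  qed
  have cr: "P (\<tau> - 1) \<noteq> P (\<tau> + \<delta>)" if "0 < L1" "0 < L2"
  proof -
    have "P (\<tau> - 1) = w ! (L1 - 1)" using Fa[of "L1 - 1"] that unfolding \<tau>_def by simp
    moreover have "P (\<tau> + \<delta>) = w ! L1" using Fb[of L1] that unfolding L2_def by simp
    moreover have "w ! (L1 - 1) \<noteq> w ! Suc (L1 - 1)" using alt[of "L1 - 1"] that unfolding L2_def by simp
    ultimately show ?thesis using that by simp
  qed
  have dl: "\<delta> = 0 \<or> \<delta> = k" unfolding \<delta>_def by simp
  have ev: "even (L1 + L2)" unfolding L2_def L_def L1_def by simp
  have len: "k \<le> L1 + L2 + 1" unfolding L2_def L1_def using Lk by simp
  have L1t: "L1 \<le> \<tau>" unfolding \<tau>_def by simp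
  show False using core[OF per gh ke nd L1t p1 p2 cr dl ev len] by blast
qed

lemma morph_Cons: "morph_ext \<phi> (c # w) = \<phi> c @ morph_ext \<phi> w" by (simp add: morph_ext_def)
lemma morph_Nil: "morph_ext \<phi> [] = []" by (simp add: morph_ext_def)

lemma shift_id:
  assumes "\<phi> La = x @ s2" "\<phi> Lb = s2 @ y" "\<phi> Lb = y @ s1" "\<phi> La = s1 @ x"
  shows "x @ morph_ext \<phi> (ba m) = morph_ext \<phi> (ab m) @ x"
proof (induction m)
  case 0 then show ?case by (simp add: ab_def ba_def morph_Nil)
next
  case (Suc m)
  have "ba (Suc m) = Lb # La # ba m" by (simp add: ba_def)
  then have "x @ morph_ext \<phi> (ba (Suc m)) = x @ \<phi> Lb @ \<phi> La @ morph_ext \<phi> (ba m)" by (simp add: morph_Cons)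
  also have "\<dots> = x @ (s2 @ y) @ (s1 @ x) @ morph_ext \<phi> (ba m)" using assms(2,4) by simp
  also have "\<dots> = (x @ s2) @ (y @ s1) @ (x @ morph_ext \<phi> (ba m))" by simp
  also have "\<dots> = \<phi> La @ \<phi> Lb @ morph_ext \<phi> (ab m) @ x" using assms(1,3) Suc by simp
  also have "\<dots> = morph_ext \<phi> (ab (Suc m)) @ x" by (simp add: ab_def morph_Cons)
  finally show ?case .
qed

lemma main_id:
  assumes "\<phi> La = x @ s2" "\<phi> Lb = s2 @ y" "\<phi> Lb = y @ s1" "\<phi> La = s1 @ x"
  shows "morph_ext \<phi> (ab (Suc m)) = x @ morph_ext \<phi> (ba m @ [Lb]) @ s1"
proof -
  have "morph_ext \<phi> (ab (Suc m)) = morph_ext \<phi> (ab m) @ \<phi> La @ \<phi> Lb"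
    by (simp add: ab_snoc morph_append morph_Cons morph_Nil)
  also have "\<dots> = (morph_ext \<phi> (ab m) @ x) @ (s2 @ y) @ s1" using assms(1,3) by simp
  also have "\<dots> = x @ morph_ext \<phi> (ba m) @ \<phi> Lb @ s1" using shift_id[OF assms, of m] assms(2) by simp
  also have "\<dots> = x @ morph_ext \<phi> (ba m @ [Lb]) @ s1" by (simp add: morph_append morph_Cons morph_Nil)
  finally show ?thesis .
qed

definition altw :: "letter list \<Rightarrow> bool" where
  "altw w = (\<forall>i. Suc i < length w \<longrightarrow> w ! i \<noteq> w ! Suc i)"

lemma altw_nth:
  assumes "altw w" "w ! j = La" "j + i < length w"
  shows "w ! (j + i) = (if even i then La else Lb)"
  using assms(3)
proof (induction i)
  case 0 then show ?case using assms(2) by simp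
next
  case (Suc i)
  have "w ! (j + i) \<noteq> w ! Suc (j + i)" using assms(1) Suc.prems unfolding altw_def by simp
  then show ?case using Suc by (cases "w ! Suc (j + i)") (auto split: if_splits)
qed

lemma morph_altw:
  fixes \<phi> :: morph and P :: "nat \<Rightarrow> letter"
  assumes unif: "\<forall>c. length (\<phi> c) = k" and k2: "2 \<le> k"
    and phiP: "\<And>c j. j < k \<Longrightarrow> \<phi> c ! j = P (j + (if c = La then 0 else k))"
    and P2k: "\<And>n. P (n + 2*k) = P n"
    and alt: "\<forall>n. P n \<noteq> P (Suc n)"
    and az: "altw z"
  shows "altw (morph_ext \<phi> z)"
  unfolding altw_def
proof (intro allI impI)
  fix i assume i: "Suc i < length (morph_ext \<phi> z)"
  have k0: "0 < k" using k2 by simp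
  have lz: "length (morph_ext \<phi> z) = k * length z" using morph_len[OF unif] .
  have F: "morph_ext \<phi> z ! p = P (p mod k + (if z ! (p div k) = La then 0 else k))" if "p < k * length z" for p
    using nth_morph[OF unif that] phiP[of "p mod k"] k0 by simp
  define q where "q = i div k"
  define r where "r = i mod k"
  have ie: "i = q*k + r" "r < k" unfolding q_def r_def using k0 by auto
  show "morph_ext \<phi> z ! i \<noteq> morph_ext \<phi> z ! Suc i"
  proof (cases "Suc r < k")
    case True
    have e: "Suc i = q*k + Suc r" using ie by simp
    have d1: "i div k = q" "i mod k = r" using q_def r_def by auto
    have d2: "Suc i div k = q" "Suc i mod k = Suc r" unfolding e using divmod_blk[OF k0 True, of q] by simp_all
    show ?thesis using F[of i] F[of "Suc i"] i lz d1 d2 alt by simp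
  next
    case False
    then have r: "r = k - 1" using ie by simp
    have e: "Suc i = Suc q * k + 0" using ie r k0 by simp
    have d1: "i div k = q" "i mod k = k - 1" using q_def r_def r by auto
    have d2: "Suc i div k = Suc q" "Suc i mod k = 0" unfolding e using divmod_blk[OF k0 k0, of "Suc q"] by simp_all
    have "Suc q < length z"
    proof -
      have "Suc i div k < length z" using i lz k0 by (simp add: div_less_iff_less_mult mult.commute)
      then show ?thesis using d2 by simp
    qed
    then have XY: "z ! q \<noteq> z ! Suc q" using az unfolding altw_def by simp
    have v1: "morph_ext \<phi> z ! i = P (k - 1 + (if z ! q = La then 0 else k))" using F[of i] i lz d1 by simp
    have v2: "morph_ext \<phi> z ! Suc i = P (if z ! Suc q = La then 0 else k)" using F[of "Suc i"] i lz d2 by simp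
    show ?thesis
    proof (cases "z ! q")
      case La
      then have "z ! Suc q = Lb" using XY by (cases "z ! Suc q") auto
      moreover have "Suc (k - 1) = k" using k0 by simp
      ultimately show ?thesis using v1 v2 La alt[rule_format, of "k - 1"] by simp
    next
      case Lb
      then have "z ! Suc q = La" using XY by (cases "z ! Suc q") auto
      moreover have "Suc (k - 1 + k) = 0 + 2*k" using k0 by simp
      ultimately show ?thesis using v1 v2 Lb alt[rule_format, of "k - 1 + k"] P2k[of 0] by (simp add: mult_2)
    qed
  qed
qed

lemma deg_false:
  fixes \<phi> :: morph and P :: "nat \<Rightarrow> letter"
  assumes unif: "\<forall>c. length (\<phi> c) = k" and k2: "2 \<le> k"
    and phiP: "\<And>c j. j < k \<Longrightarrow> \<phi> c ! j = P (j + (if c = La then 0 else k))"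
    and P2k: "\<And>n. P (n + 2*k) = P n"
    and alt: "\<forall>n. P n \<noteq> P (Suc n)"
    and circ: "circular \<phi> [La]"
    and l0: "0 < l" and lk: "l < k" and lx: "length x = l"
    and eqs: "\<phi> La = x @ s2" "\<phi> Lb = s2 @ y" "\<phi> Lb = y @ s1" "\<phi> La = s1 @ x"
  shows False
proof -
  have alln: "altw ((morph_ext \<phi> ^^ n) [La])" for n
  proof (induction n)
    case 0 then show ?case by (simp add: altw_def)
  next
    case (Suc n) then show ?case using morph_altw[OF unif k2 phiP P2k alt] by simp
  qed
  have lenn: "length ((morph_ext \<phi> ^^ n) [La]) = k^n" for n
  proof (induction n)
    case 0 then show ?case by simp
  next
    case (Suc n) then show ?case using morph_len[OF unif] by simp
  qed
  have inlang: "(morph_ext \<phi> ^^ n) [La] \<in> lang \<phi> [La]" for n unfolding lang_def by blast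
  have allab: "ab m \<in> factors \<phi> [La]" for m
  proof -
    define n where "n = 2*m + 2"
    define W where "W = (morph_ext \<phi> ^^ n) [La]"
    have "n < 2^n" by (rule less_exp)
    moreover have "(2::nat)^n \<le> k^n" using k2 by (rule power_mono) simp
    ultimately have lW: "2*m + 2 \<le> length W" unfolding W_def lenn n_def by linarith
    have aW: "altw W" unfolding W_def by (rule alln)
    obtain j where j: "j \<le> 1" "W ! j = La"
    proof (cases "W ! 0")
      case La then show ?thesis using that[of 0] by simp
    next
      case Lb
      have "W ! 0 \<noteq> W ! Suc 0" using aW lW unfolding altw_def by simp
      then have "W ! 1 = La" using Lb by (cases "W ! 1") auto
      then show ?thesis using that[of 1] by simp
    qed
    have t: "take (2*m) (drop j W) = ab m"
    proof (rule nth_equalityI)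
      show "length (take (2*m) (drop j W)) = length (ab m)" using lW j by (simp add: ab_len)
    next
      fix i assume "i < length (take (2*m) (drop j W))"
      then have i: "i < 2*m" "j + i < length W" using lW j by auto
      have "take (2*m) (drop j W) ! i = W ! (j + i)" using i by simp
      also have "\<dots> = (if even i then La else Lb)" using altw_nth[OF aW j(2) i(2)] .
      also have "\<dots> = ab m ! i" using ab_nth[OF i(1)] by simp
      finally show "take (2*m) (drop j W) ! i = ab m ! i" .
    qed
    have "W = take j W @ take (2*m) (drop j W) @ drop (2*m) (drop j W)"
      by (metis append_take_drop_id)
    then have "W = take j W @ ab m @ drop (2*m) (drop j W)" using t by simp
    then show ?thesis using inlang[of n] unfolding factors_def W_def by blast
  qed
  obtain Z where Z: "\<forall>u\<in>factors \<phi> [La]. Z < length u \<longrightarrow> (\<exists>j. sync_point \<phi> [La] u j)"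
    using circ unfolding circular_def by blast
  define v where "v = ba Z @ [Lb]"
  define u where "u = morph_ext \<phi> v"
  have "ab (Suc Z) = [La] @ v @ []" unfolding v_def using ab_ba by simp
  then have vf: "v \<in> factors \<phi> [La]" using fac_sub[OF allab] by blast
  have uf: "u \<in> factors \<phi> [La]" unfolding u_def using fac_morph[OF vf] .
  have lv: "length v = 2*Z + 1" unfolding v_def by (simp add: ba_len)
  have lu: "length u = k * (2*Z + 1)" unfolding u_def using morph_len[OF unif] lv by simp
  have "Z < length u" using lu k2
    by (metis Suc_eq_plus1 Suc_le_eq le_add2 le_trans mult_le_mono1 mult_1 one_le_numeral add_leD1 less_le_trans not_less_eq_eq le_add1 mult_2 trans_le_add1 lessI)
  then obtain j where sp: "sync_point \<phi> [La] u j" using Z uf by blast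
  have I1: "interp \<phi> [La] u ([], v, [])" unfolding interp_def using vf u_def by simp
  have I2: "interp \<phi> [La] u (x, ab (Suc Z), s1)" unfolding interp_def
    using allab main_id[OF eqs, of Z] u_def v_def by simp
  have jl: "j \<le> length u" and sy: "synchronized_at \<phi> u ([], v, []) (x, ab (Suc Z), s1) j"
    using sp I1 I2 unfolding sync_point_def by blast+
  obtain i i' where ii: "i \<le> length v" "morph_ext \<phi> (take i v) = [] @ take j u"
    "i' \<le> length (ab (Suc Z))" "morph_ext \<phi> (take i' (ab (Suc Z))) = x @ take j u"
    using sy unfolding synchronized_at_def by auto
  have "k * i = j" using arg_cong[OF ii(2), of length] morph_len[OF unif] ii(1) jl by simp
  moreover have "k * i' = l + j" using arg_cong[OF ii(4), of length] morph_len[OF unif] ii(3) jl lx by simp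
  ultimately have e: "k * i' = l + k * i" by simp
  then have "k * (i' - i) = l" by (simp add: diff_mult_distrib2)
  then show False using l0 lk
    by (metis mult_0_right nat_mult_le_cancel_disj not_less le_refl mult_le_mono2 mult_1_right less_one not_gr0 nat_less_le)
qed

theorem mainTheorem11:
  fixes \<phi> :: morph and k l :: nat and s1 s2 :: "letter list"
  assumes "k \<ge> 2"
    and "circular \<phi> [La]"
    and "uniform \<phi> k"
    and "s1 \<noteq> s2"
    and "GO_edge \<phi> s1 ([\<phi> La], [\<phi> La], l) s2"
    and "GO_edge \<phi> s2 ([\<phi> Lb], [\<phi> Lb], l) s1"
  shows "real (min (R_ab \<phi> [La]) (R_ba \<phi> [La])) \<le> (real k - 2) / 2"
proof -
  define A where "A = \<phi> La"
  define B where "B = \<phi> Lb"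
  have lA: "length A = k" and lB: "length B = k" using assms(3) unfolding uniform_def A_def B_def by auto
  have unif: "\<forall>c. length (\<phi> c) = k" using lA lB unfolding A_def B_def by (metis letter.exhaust)
  have k0: "0 < k" using assms(1) by simp
  have ef1: "0 < l \<and> l < k \<and> A = s1 @ drop (k - l) A \<and> A = take l A @ s2 \<and> drop (k-l) A = take l A
     \<and> s1 = take (k - l) A \<and> s2 = drop l A" using edge_facts[OF assms(5)[folded A_def] lA] .
  have ef2: "0 < l \<and> l < k \<and> B = s2 @ drop (k - l) B \<and> B = take l B @ s1 \<and> drop (k-l) B = take l B
     \<and> s2 = take (k - l) B \<and> s1 = drop l B" using edge_facts[OF assms(6)[folded B_def] lB] .
  define x where "x = take l A"
  define y where "y = take l B"
  have l0: "0 < l" and lk: "l < k" using ef1 by auto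
  have eA1: "A = x @ s2" and eA2: "A = s1 @ x" using ef1 unfolding x_def by auto
  have eB1: "B = y @ s1" and eB2: "B = s2 @ y" using ef2 unfolding y_def by auto
  have lx: "length x = l" and ly: "length y = l" unfolding x_def y_def using lA lB lk by auto
  have ls1: "length s1 = k - l" and ls2: "length s2 = k - l" using ef1 lA by auto
  have nA1: "A ! (l + i) = B ! i" if "i < k - l" for i
  proof -
    have "A ! (l + i) = s2 ! i" using eA1 lx by (metis nth_append_length_plus)
    moreover have "B ! i = s2 ! i" using eB2 ls2 that by (simp add: nth_append)
    ultimately show ?thesis by simp
  qed
  have nB1: "B ! (l + i) = A ! i" if "i < k - l" for i
  proof -
    have "B ! (l + i) = s1 ! i" using eB1 ly by (metis nth_append_length_plus)
    moreover have "A ! i = s1 ! i" using eA2 ls1 that by (simp add: nth_append)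
    ultimately show ?thesis by simp
  qed
  have nA2: "A ! (k - l + j) = A ! j" if "j < l" for j
  proof -
    have "A ! (k - l + j) = x ! j" using eA2 ls1 by (metis nth_append_length_plus)
    moreover have "A ! j = x ! j" using eA1 lx that by (simp add: nth_append)
    ultimately show ?thesis by simp
  qed
  have nB2: "B ! (k - l + j) = B ! j" if "j < l" for j
  proof -
    have "B ! (k - l + j) = y ! j" using eB2 ls2 by (metis nth_append_length_plus)
    moreover have "B ! j = y ! j" using eB1 ly that by (simp add: nth_append)
    ultimately show ?thesis by simp
  qed
  define P where "P = PP A B k"
  have Pl: "P (n + l) = P (n + k)" for n
    unfolding P_def using PP_l[OF l0 lk lA lB nA1 nB1 nA2 nB2] .
  have P2k: "P (n + 2*k) = P n" for n unfolding P_def using PP_2k[OF k0] .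
  have P2k': "\<forall>n. P (n + 2*k) = P n" using P2k by blast
  have Pd: "\<forall>n. P (n + (k - l)) = P n"
  proof
    fix n
    have "P ((n + (k - l) + k) + l) = P ((n + (k - l) + k) + k)" by (rule Pl)
    moreover have "(n + (k - l) + k) + l = n + 2*k" using lk by simp
    moreover have "(n + (k - l) + k) + k = (n + (k - l)) + 2*k" by simp
    ultimately show "P (n + (k - l)) = P n" using P2k by metis
  qed
  have phiP: "\<phi> c ! j = P (j + (if c = La then 0 else k))" if "j < k" for c j
  proof (cases c)
    case La
    then show ?thesis using PP_blk[OF k0 that, of A B 0] unfolding P_def A_def by simp
  next
    case Lb
    then show ?thesis using PP_blk[OF k0 that, of A B 1] unfolding P_def B_def by (simp add: add.commute)
  qed
  have notk: False if "\<forall>n. P (n + k) = P n"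
  proof -
    have "A = B"
    proof (rule nth_equalityI)
      show "length A = length B" using lA lB by simp
    next
      fix i assume "i < length A"
      then have i: "i < k" using lA by simp
      have "A ! i = P (0*k + i)" using PP_blk[OF k0 i, of A B 0] unfolding P_def by simp
      moreover have "B ! i = P (1*k + i)" using PP_blk[OF k0 i, of A B 1] unfolding P_def by simp
      moreover have "P (1*k + i) = P (0*k + i)" using that by (simp add: add.commute)
      ultimately show "A ! i = B ! i" by simp
    qed
    then have "s1 = s2" using ef1 ef2 by metis
    then show False using assms(4) by simp
  qed
  define g where "g = gcd (k - l) (2*k)"
  have dne: "k - l \<noteq> 0" using lk by simp
  have Pg: "\<forall>n. P (n + g) = P n" unfolding g_def using per_gcd[OF Pd P2k' dne] .
  have gd: "g dvd k - l" "g dvd 2*k" unfolding g_def by simp_all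
  have g0: "0 < g" unfolding g_def using dne by simp
  have gle: "g \<le> k - l" using gd(1) dne by (simp add: dvd_imp_le)
  have gnk: "\<not> g dvd k"
  proof
    assume "g dvd k"
    then obtain c where "k = g * c" by blast
    then have "\<forall>n. P (n + k) = P n" using per_mult[OF Pg] by simp
    then show False using notk by blast
  qed
  obtain c where c: "2*k = g*c" using gd(2) by blast
  have oc: "odd c"
  proof
    assume "even c"
    then obtain c' where "c = 2*c'" by blast
    then have "k = g*c'" using c by simp
    then show False using gnk by simp
  qed
  then obtain e where e: "c = 2*e + 1" using oddE by blast
  define t where "t = g*e"
  have "2*k = 2*t + g" using c e unfolding t_def by (simp add: algebra_simps)
  then have ge: "even g" by presburger
  define h where "h = g div 2"
  have gh: "g = 2*h" using ge unfolding h_def by simp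
  have ke: "k = g*e + h" using \<open>2*k = 2*t + g\<close> gh unfolding t_def by simp
  have e1: "1 \<le> e"
  proof (rule ccontr)
    assume "\<not> 1 \<le> e"
    then have "k = h" using ke by simp
    then show False using gle gh lk g0 by simp
  qed
  show ?thesis
  proof (cases "\<exists>n. P n = P (Suc n)")
    case True
    have h2: "2 \<le> h"
    proof (rule ccontr)
      assume "\<not> 2 \<le> h"
      then have g2: "g = 2" using gh g0 by simp
      obtain n0 where n0: "P n0 = P (Suc n0)" using True by blast
      have Pm: "P m = P (m mod 2)" for m using per_mod[OF Pg] g2 by simp
      have P01: "P 0 = P 1"
      proof (cases "even n0")
        case True
        then have "n0 mod 2 = 0" "Suc n0 mod 2 = 1" by presburger+
        then show ?thesis using n0 Pm[of n0] Pm[of "Suc n0"] by simp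
      next
        case False
        then have "n0 mod 2 = 1" "Suc n0 mod 2 = 0" by presburger+
        then show ?thesis using n0 Pm[of n0] Pm[of "Suc n0"] by simp
      qed
      have "P m = P 0" for m
      proof -
        have "m mod 2 = 0 \<or> m mod 2 = 1" by presburger
        then show ?thesis using Pm[of m] P01 by auto
      qed
      then have "\<forall>n. P (n + k) = P n" by metis
      then show False using notk by blast
    qed
    define S where "S = {m. concat (replicate m [La, Lb]) \<in> factors \<phi> [La]}"
    have Sb: "2*m \<le> k - 2" if "m \<in> S" for m
      using nd_bound[OF unif assms(1) phiP P2k Pg gh h2 ke e1 True] that unfolding S_def ab_def by simp
    have fin: "finite S"
    proof -
      have "S \<subseteq> {..k}" using Sb by fastforce
      then show ?thesis using finite_subset by blast
    qed
    have "0 \<in> S" unfolding S_def using nil_fac by simp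
    then have "Max S \<in> S" using fin Max_in by blast
    then have "2 * Max S \<le> k - 2" using Sb by blast
    then have "2 * R_ab \<phi> [La] \<le> k - 2" unfolding R_ab_def S_def by simp
    then have "real (2 * R_ab \<phi> [La]) \<le> real k - 2" using assms(1) by linarith
    then have "real (R_ab \<phi> [La]) \<le> (real k - 2) / 2" by simp
    moreover have "real (min (R_ab \<phi> [La]) (R_ba \<phi> [La])) \<le> real (R_ab \<phi> [La])" by simp
    ultimately show ?thesis by linarith
  next
    case False
    then have alt: "\<forall>n. P n \<noteq> P (Suc n)" by blast
    show ?thesis using deg_false[OF unif assms(1) phiP P2k alt assms(2) l0 lk lx
        eA1[unfolded A_def] eB2[unfolded B_def] eB1[unfolded B_def] eA2[unfolded A_def]] by blast
  qed
qed

end
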